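(* Let $G$ be a finite group. Then (1) $\mathrm{MinDim}(G)\leq \mathrm{MinInt}(G)$; and (2) $\mathrm{MaxDim}(G)\leq \mathrm{MaxInt}(G)$.
   Context: A subgroup $H$ of a finite group $G$ is a maximal intersection in $G$ if $H=M_1\cap\dots\cap M_t$ for some maximal subgroups $M_1,\dots,M_t$ of $G$ ($t\ge 1$). Let $\mathcal M(G)$ be the poset (under inclusion) consisting of $G$ and all maximal intersections in $G$. A set $\mathcal X$ of maximal subgroups of $G$ is irredundant if the intersection of the members of $\mathcal X$ is not equal to the intersection of the members of any proper subset of $\mathcal X$. $\mathrm{MaxDim}(G)$ is the maximal size of an irredundant set of maximal subgroups of $G$. An irredundant set is maximal irredundant if it is not properly contained in any other irredundant set of maximal subgroups; $\mathrm{MinDim}(G)$ is the minimal size of a maximal irredundant set. An unrefinable chain in $\mathcal M(G)$ is a chain $K_t<K_{t-1}<\dots<K_0$ of elements of $\mathcal M(G)$ to which no further element of $\mathcal M(G)$ can be added (so it runs from the Frattini subgroup $\Phi(G)$ to $G$ with no element of $\mathcal M(G)$ strictly between consecutive terms); its length is $t$. $\mathrm{MinInt}(G)$ and $\mathrm{MaxInt}(G)$ denote the minimal and the maximal length of an unrefinable chain in $\mathcal M(G)$. *)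

theory Defs
  imports "HOL-Algebra.Algebra"
begin

definition max_subgroup :: "('a, 'b) monoid_scheme \<Rightarrow> 'a set \<Rightarrow> bool" where
  "max_subgroup G M \<longleftrightarrow> subgroup M G \<and> M \<noteq> carrier G \<and>
     (\<forall>H. subgroup H G \<and> M \<subseteq> H \<longrightarrow> H = M \<or> H = carrier G)"

definition max_subgroups :: "('a, 'b) monoid_scheme \<Rightarrow> 'a set set" where
  "max_subgroups G = {M. max_subgroup G M}"

text \<open>Intersection of a family of subgroups inside G (the empty family gives G).\<close>
definition inter_in :: "('a, 'b) monoid_scheme \<Rightarrow> 'a set set \<Rightarrow> 'a set" where
  "inter_in G S = carrier G \<inter> Inter S"

definition max_intersection :: "('a, 'b) monoid_scheme \<Rightarrow> 'a set \<Rightarrow> bool" where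
  "max_intersection G H \<longleftrightarrow>
     (\<exists>S. S \<noteq> {} \<and> finite S \<and> S \<subseteq> max_subgroups G \<and> H = Inter S)"

definition MI :: "('a, 'b) monoid_scheme \<Rightarrow> 'a set set" where
  "MI G = insert (carrier G) {H. max_intersection G H}"

definition irredundant :: "('a, 'b) monoid_scheme \<Rightarrow> 'a set set \<Rightarrow> bool" where
  "irredundant G S \<longleftrightarrow> S \<subseteq> max_subgroups G \<and>
     (\<forall>T. T \<subset> S \<longrightarrow> inter_in G T \<noteq> inter_in G S)"

definition max_irredundant :: "('a, 'b) monoid_scheme \<Rightarrow> 'a set set \<Rightarrow> bool" where
  "max_irredundant G S \<longleftrightarrow> irredundant G S \<and> (\<forall>T. irredundant G T \<and> S \<subseteq> T \<longrightarrow> T = S)"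

definition MaxDim :: "('a, 'b) monoid_scheme \<Rightarrow> nat" where
  "MaxDim G = Max {card S | S. irredundant G S}"

definition MinDim :: "('a, 'b) monoid_scheme \<Rightarrow> nat" where
  "MinDim G = Min {card S | S. max_irredundant G S}"

definition MI_chain :: "('a, 'b) monoid_scheme \<Rightarrow> 'a set set \<Rightarrow> bool" where
  "MI_chain G C \<longleftrightarrow> C \<subseteq> MI G \<and> (\<forall>x\<in>C. \<forall>y\<in>C. x \<subseteq> y \<or> y \<subseteq> x)"

definition unrefinable_chain :: "('a, 'b) monoid_scheme \<Rightarrow> 'a set set \<Rightarrow> bool" where
  "unrefinable_chain G C \<longleftrightarrow> MI_chain G C \<and> (\<forall>D. MI_chain G D \<and> C \<subseteq> D \<longrightarrow> D = C)"

text \<open>A chain K_t < ... < K_0 has t+1 elements and length t.\<close>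
definition MinInt :: "('a, 'b) monoid_scheme \<Rightarrow> nat" where
  "MinInt G = Min {card C - 1 | C. unrefinable_chain G C}"

definition MaxInt :: "('a, 'b) monoid_scheme \<Rightarrow> nat" where
  "MaxInt G = Max {card C - 1 | C. unrefinable_chain G C}"

end

theory Submission
  imports Defs
begin

lemma ms_sub: "M \<in> max_subgroups G \<Longrightarrow> M \<subseteq> carrier G"
  unfolding max_subgroups_def max_subgroup_def using subgroup.subset by blast

lemma ms_fin: "finite (carrier G) \<Longrightarrow> finite (max_subgroups G)"
  by (rule finite_subset[of _ "Pow (carrier G)"]) (auto dest: ms_sub)

lemma MI_sub: "K \<in> MI G \<Longrightarrow> K \<subseteq> carrier G"
  unfolding MI_def max_intersection_def by (auto dest: ms_sub)

lemma MI_fin: "finite (carrier G) \<Longrightarrow> finite (MI G)"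
  by (rule finite_subset[of _ "Pow (carrier G)"]) (auto dest: MI_sub)

lemma MI_cases: "K \<in> MI G \<Longrightarrow> K \<noteq> carrier G \<Longrightarrow>
   \<exists>T. T \<noteq> {} \<and> finite T \<and> T \<subseteq> max_subgroups G \<and> K = \<Inter>T"
  unfolding MI_def max_intersection_def by auto

lemma irr_ms: "irredundant G S \<Longrightarrow> S \<subseteq> max_subgroups G"
  unfolding irredundant_def by (elim conjE)

lemma maxirr_irr: "max_irredundant G S \<Longrightarrow> irredundant G S"
  unfolding max_irredundant_def by (elim conjE)

lemma MI_intro: "S \<noteq> {} \<Longrightarrow> finite S \<Longrightarrow> S \<subseteq> max_subgroups G \<Longrightarrow> \<Inter>S \<in> MI G"
  unfolding MI_def max_intersection_def by (intro insertI2 CollectI exI[of _ S]) simp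

lemma MI_int: assumes "Y \<in> MI G" "M \<in> max_subgroups G" shows "Y \<inter> M \<in> MI G"
proof (cases "Y = carrier G")
  case True
  then have "Y \<inter> M = \<Inter>{M}" using ms_sub[OF assms(2)] by auto
  moreover have "\<Inter>{M} \<in> MI G" using assms(2) by (intro MI_intro) simp_all
  ultimately show ?thesis by simp
next
  case False
  then obtain T where T: "T \<noteq> {}" "finite T" "T \<subseteq> max_subgroups G" "Y = \<Inter>T"
    using MI_cases[OF assms(1)] by blast
  then have "Y \<inter> M = \<Inter>(insert M T)" by auto
  moreover have "\<Inter>(insert M T) \<in> MI G" using T assms(2) by (intro MI_intro) simp_all
  ultimately show ?thesis by simp
qed

lemma inter_in_insert: "M \<subseteq> carrier G \<Longrightarrow> inter_in G (insert M S) = M \<inter> inter_in G S"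
  unfolding inter_in_def by auto

lemma inter_in_ms: assumes "S \<noteq> {}" "S \<subseteq> max_subgroups G" shows "inter_in G S = \<Inter>S"
proof -
  obtain M where M: "M \<in> S" using assms(1) by blast
  have "\<Inter>S \<subseteq> M" using M by (rule Inter_lower)
  also have "M \<subseteq> carrier G" using ms_sub[OF subsetD[OF assms(2) M]] .
  finally show ?thesis unfolding inter_in_def using Int_absorb1 by metis
qed

lemma inter_in_MI: assumes "S \<subseteq> max_subgroups G" "finite S" shows "inter_in G S \<in> MI G"
proof (cases "S = {}")
  case True then show ?thesis by (simp add: inter_in_def MI_def)
next
  case False then show ?thesis using assms inter_in_ms[OF False assms(1)] MI_intro[of S G] by simp
qed

lemma chain_insert:
  assumes "\<forall>x\<in>C. \<forall>y\<in>C. x \<subseteq> y \<or> y \<subseteq> x" "\<forall>Z\<in>C. Z \<subseteq> w \<or> w \<subseteq> Z"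
  shows "\<forall>x\<in>insert w C. \<forall>y\<in>insert w C. x \<subseteq> y \<or> y \<subseteq> x"
proof (intro ballI)
  fix x y assume x: "x \<in> insert w C" and y: "y \<in> insert w C"
  show "x \<subseteq> y \<or> y \<subseteq> x"
  proof (cases "x = w")
    case True
    show ?thesis
    proof (cases "y = w")
      case True then show ?thesis using \<open>x = w\<close> by simp
    next
      case False then have "y \<in> C" using y by simp
      then have "y \<subseteq> w \<or> w \<subseteq> y" using assms(2) by simp
      then show ?thesis using True by (elim disjE) simp_all
    qed
  next
    case False
    then have xC: "x \<in> C" using x by simp
    show ?thesis
    proof (cases "y = w")
      case True
      have "x \<subseteq> w \<or> w \<subseteq> x" using assms(2) xC by simp
      then show ?thesis using True by (elim disjE) simp_all
    next
      case False then have "y \<in> C" using y by simp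
      then show ?thesis using assms(1) xC by simp
    qed
  qed
qed

lemma unref_props: assumes "unrefinable_chain G C"
  shows "C \<subseteq> MI G" "\<forall>x\<in>C. \<forall>y\<in>C. x \<subseteq> y \<or> y \<subseteq> x"
proof -
  show "C \<subseteq> MI G" using assms unfolding unrefinable_chain_def MI_chain_def
    by (elim conjE) assumption
  show "\<forall>x\<in>C. \<forall>y\<in>C. x \<subseteq> y \<or> y \<subseteq> x" using assms unfolding unrefinable_chain_def MI_chain_def
    by (elim conjE) assumption
qed

lemma unref_max: assumes "unrefinable_chain G C" "MI_chain G D" "C \<subseteq> D" shows "D = C"
proof -
  have "\<forall>D. MI_chain G D \<and> C \<subseteq> D \<longrightarrow> D = C"
    using assms(1) unfolding unrefinable_chain_def by (elim conjE)
  then show ?thesis using assms(2,3) by blast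
qed

lemma insert_in: "unrefinable_chain G C \<Longrightarrow> MI_chain G (insert w C) \<Longrightarrow> w \<in> C"
  using unref_max[of G C "insert w C"] by blast

lemma unref_carrier: assumes "unrefinable_chain G C" shows "carrier G \<in> C"
proof -
  have CM: "C \<subseteq> MI G" using unref_props(1)[OF assms] .
  have ch: "\<forall>x\<in>C. \<forall>y\<in>C. x \<subseteq> y \<or> y \<subseteq> x" using unref_props(2)[OF assms] .
  have cm: "carrier G \<in> MI G" by (simp add: MI_def)
  have a: "insert (carrier G) C \<subseteq> MI G" using CM cm by (simp add: insert_subset)
  have b: "\<forall>Z\<in>C. Z \<subseteq> carrier G \<or> carrier G \<subseteq> Z"
  proof
    fix Z assume "Z \<in> C"
    then have "Z \<in> MI G" using CM by (rule subsetD[rotated])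
    then show "Z \<subseteq> carrier G \<or> carrier G \<subseteq> Z" by (intro disjI1) (rule MI_sub)
  qed
  have "MI_chain G (insert (carrier G) C)"
    unfolding MI_chain_def by (intro conjI a chain_insert[OF ch b])
  then show ?thesis by (rule insert_in[OF assms])
qed

lemma MI_chain_sub: "MI_chain G D \<Longrightarrow> D \<subseteq> MI G"
  unfolding MI_chain_def by (elim conjE)

lemma extend_chain: assumes "finite (carrier G)" "MI_chain G C"
  shows "\<exists>D. unrefinable_chain G D \<and> C \<subseteq> D"
proof -
  let ?A = "{D. MI_chain G D \<and> C \<subseteq> D}"
  have "?A \<subseteq> Pow (MI G)" using MI_chain_sub by blast
  moreover have "finite (Pow (MI G))" using MI_fin[OF assms(1)] by simp
  ultimately have finA: "finite ?A" by (rule finite_subset)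
  have neA: "?A \<noteq> {}" using assms(2) by blast
  obtain D where D: "D \<in> ?A" and mx: "\<forall>b\<in>?A. D \<le> b \<longrightarrow> D = b"
    using finite_has_maximal[OF finA neA] by (elim bexE)
  have DC: "MI_chain G D" "C \<subseteq> D" using D by simp_all
  have "unrefinable_chain G D"
    unfolding unrefinable_chain_def
  proof (intro conjI allI impI)
    show "MI_chain G D" by (rule DC(1))
    fix D' assume D': "MI_chain G D' \<and> D \<subseteq> D'"
    then have "D' \<in> ?A" using DC(2) by auto
    then have "D = D'" using mx D' by simp
    then show "D' = D" by simp
  qed
  then show ?thesis using DC(2) by blast
qed

lemma irr_prop: assumes "irredundant G S" "T \<subset> S" shows "inter_in G T \<noteq> inter_in G S"
proof -
  have "\<forall>T. T \<subset> S \<longrightarrow> inter_in G T \<noteq> inter_in G S"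
    using assms(1) unfolding irredundant_def by (elim conjE)
  then show ?thesis using assms(2) by simp
qed

lemma inter_in_Un: "inter_in G (A \<union> B) = inter_in G A \<inter> inter_in G B"
  unfolding inter_in_def Inter_Un_distrib by blast

lemma irr_sub: assumes "irredundant G S" "F \<subseteq> S" shows "irredundant G F"
  unfolding irredundant_def
proof (intro conjI allI impI)
  show "F \<subseteq> max_subgroups G" using irr_ms[OF assms(1)] assms(2) by (rule subset_trans[rotated])
  fix T assume T: "T \<subset> F"
  show "inter_in G T \<noteq> inter_in G F"
  proof
    assume eq: "inter_in G T = inter_in G F"
    have "inter_in G (T \<union> (S - F)) = inter_in G T \<inter> inter_in G (S - F)"
      by (rule inter_in_Un)
    also have "\<dots> = inter_in G F \<inter> inter_in G (S - F)" using eq by simp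
    also have "\<dots> = inter_in G (F \<union> (S - F))" by (rule inter_in_Un[symmetric])
    also have "F \<union> (S - F) = S" using assms(2) by blast
    finally have "inter_in G (T \<union> (S - F)) = inter_in G S" .
    moreover have "T \<union> (S - F) \<subset> S" using T assms(2) by blast
    ultimately show False using irr_prop[OF assms(1)] by blast
  qed
qed

lemma irr_chain: assumes "finite S" "irredundant G S"
  shows "\<exists>C. MI_chain G C \<and> finite C \<and> card C = card S + 1 \<and> (\<forall>K\<in>C. inter_in G S \<subseteq> K)"
  using assms
proof (induction S rule: finite_induct)
  case empty
  have "MI_chain G {carrier G}" unfolding MI_chain_def MI_def by simp
  moreover have "inter_in G {} = carrier G" by (simp add: inter_in_def)
  ultimately show ?case by (intro exI[of _ "{carrier G}"]) simp
next
  case (insert x F)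
  have irrF: "irredundant G F" using irr_sub[OF insert.prems] by blast
  then obtain C where C: "MI_chain G C" "finite C" "card C = card F + 1" "\<forall>K\<in>C. inter_in G F \<subseteq> K"
    using insert.IH by blast
  have xM: "x \<in> max_subgroups G" using irr_ms[OF insert.prems] by simp
  have xs: "x \<subseteq> carrier G" using ms_sub[OF xM] .
  let ?w = "inter_in G (insert x F)"
  have sub: "?w \<subseteq> inter_in G F" using inter_in_insert[OF xs, of F] by simp
  have ps: "F \<subset> insert x F" using insert.hyps(2) by blast
  have ne: "inter_in G F \<noteq> ?w"
    using irr_prop[OF insert.prems ps] .
  have notin: "?w \<notin> C"
  proof
    assume "?w \<in> C"
    then have "inter_in G F \<subseteq> ?w" using C(4) by simp
    then show False using sub ne subset_antisym by blast
  qed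
  have mi: "?w \<in> MI G"
    using inter_in_MI[OF irr_ms[OF insert.prems]] insert.hyps(1) by simp
  have aux: "\<forall>Z\<in>C. Z \<subseteq> ?w \<or> ?w \<subseteq> Z"
  proof
    fix Z assume "Z \<in> C"
    then have "inter_in G F \<subseteq> Z" using C(4) by simp
    then have "?w \<subseteq> Z" using sub by (rule order_trans[rotated])
    then show "Z \<subseteq> ?w \<or> ?w \<subseteq> Z" by (rule disjI2)
  qed
  have ch: "MI_chain G (insert ?w C)"
  proof -
    have "C \<subseteq> MI G" "\<forall>x\<in>C. \<forall>y\<in>C. x \<subseteq> y \<or> y \<subseteq> x"
      using C(1) unfolding MI_chain_def by simp_all
    then show ?thesis unfolding MI_chain_def using chain_insert[of C ?w] aux mi by simp
  qed
  have cd: "card (insert ?w C) = card (insert x F) + 1"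
    using C(2,3) notin insert.hyps by simp
  have lw: "\<forall>K\<in>insert ?w C. ?w \<subseteq> K"
  proof
    fix K assume "K \<in> insert ?w C"
    then have "K = ?w \<or> K \<in> C" by simp
    then show "?w \<subseteq> K"
    proof
      assume "K \<in> C"
      then have "inter_in G F \<subseteq> K" using C(4) by simp
      then show ?thesis using sub by (rule order_trans[rotated])
    qed simp
  qed
  show ?case using ch cd lw C(2) by blast
qed

lemma chain_step:
  assumes fin: "finite (carrier G)" and U: "unrefinable_chain G C"
  shows "\<forall>K\<in>C. card {Y\<in>C. K \<subset> Y} = n \<longrightarrow>
    (\<exists>S. S \<subseteq> max_subgroups G \<and> finite S \<and> card S \<le> n \<and> inter_in G S = K)"
proof (induction n rule: less_induct)
  case (less n)
  have CM: "C \<subseteq> MI G" and ch: "\<forall>x\<in>C. \<forall>y\<in>C. x \<subseteq> y \<or> y \<subseteq> x"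
    using unref_props[OF U] by blast+
  have finC: "finite C" using finite_subset[OF CM MI_fin[OF fin]] .
  have carC: "carrier G \<in> C" using unref_carrier[OF U] .
  show ?case
  proof (intro ballI impI)
    fix K assume K: "K \<in> C" and cn: "card {Y\<in>C. K \<subset> Y} = n"
    show "\<exists>S. S \<subseteq> max_subgroups G \<and> finite S \<and> card S \<le> n \<and> inter_in G S = K"
    proof (cases "K = carrier G")
      case True
      then show ?thesis by (intro exI[of _ "{}"]) (auto simp: inter_in_def)
    next
      case False
      have KMI: "K \<in> MI G" using K CM by blast
      have Ks: "K \<subseteq> carrier G" using MI_sub[OF KMI] .
      then have Kp: "K \<subset> carrier G" using False by blast
      obtain T where T: "T \<noteq> {}" "finite T" "T \<subseteq> max_subgroups G" "K = \<Inter>T"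
        using MI_cases[OF KMI False] by blast
      let ?A = "{Y\<in>C. K \<subset> Y}"
      have finA: "finite ?A" using finC by simp
      have neA: "?A \<noteq> {}" using carC Kp by blast
      obtain Y where Y: "Y \<in> ?A" and Ymin: "\<forall>b\<in>?A. b \<le> Y \<longrightarrow> Y = b"
        using finite_has_minimal[OF finA neA] by blast
      have YC: "Y \<in> C" and KY: "K \<subset> Y" using Y by auto
      have Yle: "\<forall>Z\<in>C. K \<subset> Z \<longrightarrow> Y \<subseteq> Z"
      proof (intro ballI impI)
        fix Z assume Z: "Z \<in> C" and KZ: "K \<subset> Z"
        have "Z \<subseteq> Y \<or> Y \<subseteq> Z" using bspec[OF bspec[OF ch Z] YC] .
        moreover have "Z \<subseteq> Y \<longrightarrow> Y = Z" using Ymin Z KZ by simp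
        ultimately show "Y \<subseteq> Z" by auto
      qed
      have sub: "{Z\<in>C. Y \<subset> Z} \<subset> ?A" using KY Y by blast
      have lt: "card {Z\<in>C. Y \<subset> Z} < n"
        using psubset_card_mono[OF finA sub] cn by simp
      obtain SY where SY: "SY \<subseteq> max_subgroups G" "finite SY"
          "card SY \<le> card {Z\<in>C. Y \<subset> Z}" "inter_in G SY = Y"
        using less.IH[OF lt] YC by blast
      obtain M where M: "M \<in> T" "\<not> Y \<subseteq> M"
        using KY T(4) by blast
      have MS: "M \<in> max_subgroups G" using M T(3) by blast
      let ?W = "Y \<inter> M"
      have WMI: "?W \<in> MI G" using MI_int[OF _ MS] YC CM by blast
      have KW: "K \<subseteq> ?W" using KY M T(4) by blast
      have WY: "?W \<subset> Y" using M by blast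
      have "MI_chain G (insert ?W C)"
        unfolding MI_chain_def
      proof (intro conjI ballI)
        show "insert ?W C \<subseteq> MI G" using WMI CM by blast
      next
        fix x y assume x: "x \<in> insert ?W C" and y: "y \<in> insert ?W C"
        have aux: "\<forall>Z\<in>C. Z \<subseteq> ?W \<or> ?W \<subseteq> Z"
        proof
          fix Z assume Z: "Z \<in> C"
          show "Z \<subseteq> ?W \<or> ?W \<subseteq> Z"
          proof (cases "K \<subset> Z")
            case True then have "Y \<subseteq> Z" using Yle Z by blast
            then show ?thesis by (metis Int_lower1 order_trans)
          next
            case False then have "Z \<subseteq> K" using bspec[OF bspec[OF ch Z] K]
              by (metis psubsetI subset_refl)
            then show ?thesis using KW by (metis order_trans)
          qed
        qed
        show "x \<subseteq> y \<or> y \<subseteq> x" by (rule bspec[OF bspec[OF chain_insert[OF ch aux] x] y])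
      qed
      then have WC: "?W \<in> C" using insert_in[OF U] by blast
      have WK: "?W = K"
      proof (rule ccontr)
        assume "?W \<noteq> K"
        then have "?W \<in> ?A" using KW WC by blast
        then show False using Ymin WY by blast
      qed
      have Msub: "M \<subseteq> carrier G" using ms_sub[OF MS] .
      show ?thesis
      proof (intro exI[of _ "insert M SY"] conjI)
        show "insert M SY \<subseteq> max_subgroups G" using SY MS by blast
        show "finite (insert M SY)" using SY by simp
        show "card (insert M SY) \<le> n"
        proof -
          have "card (insert M SY) \<le> Suc (card SY)" using SY(2) by (simp add: card_insert_if)
          then show ?thesis using SY(3) lt by linarith
        qed
        show "inter_in G (insert M SY) = K"
          using inter_in_insert[OF Msub, of SY] SY(4) WK by (simp add: Int_commute)
      qed
    qed
  qed
qed

lemma get_maxirr: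
  assumes "S \<subseteq> max_subgroups G" "finite S" "\<forall>M\<in>max_subgroups G. inter_in G S \<subseteq> M"
  shows "\<exists>S'\<subseteq>S. max_irredundant G S'"
proof -
  let ?A = "{T. T \<subseteq> S \<and> inter_in G T = inter_in G S}"
  have finA: "finite ?A" using assms(2) by simp
  have neA: "?A \<noteq> {}" by blast
  obtain S' where S': "S' \<in> ?A" and mn: "\<forall>b\<in>?A. b \<le> S' \<longrightarrow> S' = b"
    using finite_has_minimal[OF finA neA] by blast
  have irr: "irredundant G S'"
    unfolding irredundant_def
  proof (intro conjI allI impI)
    show "S' \<subseteq> max_subgroups G" using S' assms(1) by blast
    fix T assume T: "T \<subset> S'"
    show "inter_in G T \<noteq> inter_in G S'"
    proof
      assume "inter_in G T = inter_in G S'"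
      then have "T \<in> ?A" using T S' by auto
      then show False using mn T by blast
    qed
  qed
  have "max_irredundant G S'"
    unfolding max_irredundant_def
  proof (intro conjI allI impI irr)
    fix T assume T: "irredundant G T \<and> S' \<subseteq> T"
    show "T = S'"
    proof (rule ccontr)
      assume ne: "T \<noteq> S'"
      have TM: "T \<subseteq> max_subgroups G" using T unfolding irredundant_def by blast
      have e1: "inter_in G T \<subseteq> inter_in G S'" using T unfolding inter_in_def by blast
      have e2: "inter_in G S' \<subseteq> inter_in G T"
        using S' assms(3) TM unfolding inter_in_def by auto
      have "S' \<subset> T" using T ne by blast
      then show False using T e1 e2 unfolding irredundant_def by blast
    qed
  qed
  then show ?thesis using S' by blast
qed

theorem mainTheorem1:
  fixes G :: "('a, 'b) monoid_scheme"
  assumes "group G" and "finite (carrier G)"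
  shows "MinDim G \<le> MinInt G \<and> MaxDim G \<le> MaxInt G"
proof
  have fin: "finite (carrier G)" by fact
  have finI: "finite {card C - 1 | C. unrefinable_chain G C}"
    by (rule finite_subset[of _ "(\<lambda>C. card C - 1) ` Pow (MI G)"])
       (auto dest: unref_props(1) simp: MI_fin[OF fin])
  have finD1: "finite {card S | S. irredundant G S}"
    by (rule finite_subset[of _ "card ` Pow (max_subgroups G)"])
       (auto dest: irr_ms simp: ms_fin[OF fin])
  have finD2: "finite {card S | S. max_irredundant G S}"
    by (rule finite_subset[of _ "card ` Pow (max_subgroups G)"])
       (auto dest: maxirr_irr irr_ms simp: ms_fin[OF fin])
  obtain C0 where C0: "unrefinable_chain G C0"
    using extend_chain[OF fin, of "{}"] by (auto simp: MI_chain_def)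
  have neI: "{card C - 1 | C. unrefinable_chain G C} \<noteq> {}" using C0 by blast
  show "MinDim G \<le> MinInt G"
  proof -
    have "MinInt G \<in> {card C - 1 | C. unrefinable_chain G C}"
      unfolding MinInt_def using Min_in[OF finI neI] .
    then obtain C where U: "unrefinable_chain G C" and cC: "MinInt G = card C - 1" by auto
    have CM: "C \<subseteq> MI G" and ch: "\<forall>x\<in>C. \<forall>y\<in>C. x \<subseteq> y \<or> y \<subseteq> x"
      using unref_props[OF U] by blast+
    have finC: "finite C" using finite_subset[OF CM MI_fin[OF fin]] .
    have neC: "C \<noteq> {}" using unref_carrier[OF U] by blast
    obtain B where B: "B \<in> C" and Bmin: "\<forall>b\<in>C. b \<le> B \<longrightarrow> B = b"
      using finite_has_minimal[OF finC neC] by blast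
    have Ble: "\<forall>Z\<in>C. B \<subseteq> Z"
    proof
      fix Z assume Z: "Z \<in> C"
      have "Z \<subseteq> B \<or> B \<subseteq> Z" using bspec[OF bspec[OF ch Z] B] .
      moreover have "Z \<subseteq> B \<longrightarrow> B = Z" using Bmin Z by simp
      ultimately show "B \<subseteq> Z" by auto
    qed
    obtain S where S: "S \<subseteq> max_subgroups G" "finite S" "card S \<le> card {Y\<in>C. B \<subset> Y}"
        "inter_in G S = B"
      using chain_step[OF fin U] B by blast
    have BM: "\<forall>M\<in>max_subgroups G. B \<subseteq> M"
    proof
      fix M assume MS: "M \<in> max_subgroups G"
      show "B \<subseteq> M"
      proof (rule ccontr)
        assume nb: "\<not> B \<subseteq> M"
        have "MI_chain G (insert (B \<inter> M) C)"
          unfolding MI_chain_def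
        proof (intro conjI ballI)
          show "insert (B \<inter> M) C \<subseteq> MI G" using MI_int[OF _ MS] B CM by blast
          fix x y assume x: "x \<in> insert (B \<inter> M) C" and y: "y \<in> insert (B \<inter> M) C"
          have aux: "\<forall>Z\<in>C. B \<inter> M \<subseteq> Z" using Ble by (metis Int_lower1 order_trans)
          have aux2: "\<forall>Z\<in>C. Z \<subseteq> B \<inter> M \<or> B \<inter> M \<subseteq> Z" using aux by fast
          show "x \<subseteq> y \<or> y \<subseteq> x" by (rule bspec[OF bspec[OF chain_insert[OF ch aux2] x] y])
        qed
        then have "B \<inter> M \<in> C" using insert_in[OF U] by blast
        then show False using Bmin nb by blast
      qed
    qed
    obtain S' where S': "S' \<subseteq> S" "max_irredundant G S'"
      using get_maxirr[OF S(1,2)] S(4) BM by blast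
    have "card S' \<le> card S" using card_mono[OF S(2) S'(1)] .
    also have "\<dots> \<le> card {Y\<in>C. B \<subset> Y}" by fact
    also have "\<dots> \<le> card (C - {B})" by (rule card_mono) (use finC in auto)
    also have "\<dots> = card C - 1" using B finC by simp
    finally have "card S' \<le> MinInt G" using cC by simp
    moreover have "MinDim G \<le> card S'"
      unfolding MinDim_def using S'(2) finD2 by (intro Min_le) auto
    ultimately show ?thesis by simp
  qed
  show "MaxDim G \<le> MaxInt G"
  proof -
    have irr0: "irredundant G {}" by (simp add: irredundant_def)
    have "MaxDim G \<in> {card S | S. irredundant G S}"
      unfolding MaxDim_def using Max_in[OF finD1] irr0 by blast
    then obtain S where S: "irredundant G S" and cS: "MaxDim G = card S" by auto
    have finS: "finite S" using irr_ms[OF S] ms_fin[OF fin] finite_subset by blast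
    obtain C where C: "MI_chain G C" "finite C" "card C = card S + 1"
      using irr_chain[OF finS S] by blast
    obtain D where D: "unrefinable_chain G D" "C \<subseteq> D" using extend_chain[OF fin C(1)] by blast
    have finD: "finite D" using unref_props(1)[OF D(1)] MI_fin[OF fin] finite_subset by blast
    have "card C \<le> card D" using card_mono[OF finD D(2)] .
    then have "MaxDim G \<le> card D - 1" using cS C(3) by simp
    also have "card D - 1 \<le> MaxInt G"
      unfolding MaxInt_def using D(1) finI by (intro Max_ge) auto
    finally show ?thesis .
  qed
qed

end
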